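(* Let $x\in(0,1)$ be irrational, and let $p^E_n/q^E_n$ ($n\ge1$) be the EICF convergents of $1-x$. Put $P_n=q^E_n-p^E_n$ and $Q_n=q^E_n$, so $P_n/Q_n=1-p^E_n/q^E_n$. For every $n\ge1$ such that $P_n$ and $Q_n$ are both odd, $P_n/Q_n$ is a best $1$-rational approximation of $x$, and hence is a principal convergent of the OOCF expansion of $x$.
   Context: Rationals are written $p/q$ with $p\in\mathbb Z$, $q\in\mathbb N$, $\gcd(p,q)=1$; $p/q$ is a $1$-rational if $p,q$ are both odd. For irrational $x$, a $1$-rational $p/q$ is a best $1$-rational approximation of $x$ if $|qx-p|<|bx-a|$ for every $1$-rational $a/b\ne p/q$ with $0<b\le q$. EICF: the map $T_E:[0,1]\to[0,1]$ is $T_E(y)=\frac1y-2k$ for $y\in[\frac1{2k+1},\frac1{2k}]$, $T_E(y)=2k-\frac1y$ for $y\in[\frac1{2k},\frac1{2k-1}]$ ($k\ge1$), $T_E(0)=0$. For irrational $y\in(0,1)$, its EICF digits are $(b_n,\eta_n)=(2k,1)$ if $T_E^{n-1}(y)\in[\frac1{2k+1},\frac1{2k}]$ and $(2k,-1)$ if $T_E^{n-1}(y)\in[\frac1{2k},\frac1{2k-1}]$, and its $n$-th EICF convergent is $p^E_n/q^E_n=\cfrac{1}{b_1+\cfrac{\eta_1}{b_2+\cfrac{\eta_2}{\ddots+\cfrac{\eta_{n-1}}{b_n}}}}$ in lowest terms with $q^E_n>0$. OOCF: digits $D=\{(1,1)\}\cup\{(a,\varepsilon):a\ge2,\ \varepsilon=\pm1\}$;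 $B(k+1,-1)=[\frac{k-1}{k},\frac{2k-1}{2k+1}]$, $B(k,1)=[\frac{2k-1}{2k+1},\frac{k}{k+1}]$ ($k\ge1$); $T(x)=\frac{kx-(k-1)}{k-(k+1)x}$ on $B(k+1,-1)$, $T(x)=\frac{k-(k+1)x}{kx-(k-1)}$ on $B(k,1)$, $T(1)=1$. The OOCF expansion of irrational $x\in(0,1)$ is the unique sequence $(a_n,\varepsilon_n)\in D$ with $T^{n-1}(x)\in B(a_n,\varepsilon_n)$ for all $n\ge1$; its $n$-th principal convergent is $1-\cfrac{1}{a_1+\cfrac{\varepsilon_1}{2-\cfrac{1}{\ddots\ \cfrac{\varepsilon_{n-1}}{2-\cfrac{1}{a_n+\varepsilon_n/2}}}}}$. *)

theory Defs
  imports Complex_Main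
begin

(* Sequences of digits are functions nat => int, indexed from 1 (the value at 0 is irrelevant). *)

(* For y in (0,1] with m = floor(1/y):
   m = 2k    : y in (1/(2k+1), 1/(2k)]   and T_E y = 1/y - 2k = 1/y - m
   m = 2k-1  : y in (1/(2k), 1/(2k-1)]   and T_E y = 2k - 1/y = m + 1 - 1/y
   This agrees with the paper's piecewise definition everywhere (the pieces agree
   at the shared endpoints). *)
definition TE :: "real \<Rightarrow> real" where
  "TE y = (if y = 0 then 0
           else if even \<lfloor>1 / y\<rfloor> then 1 / y - of_int \<lfloor>1 / y\<rfloor>
           else of_int \<lfloor>1 / y\<rfloor> + 1 - 1 / y)"

definition eicf_digit :: "real \<Rightarrow> int \<Rightarrow> int \<Rightarrow> bool" where
  "eicf_digit y bb ee \<longleftrightarrow> (\<exists>k::int. k \<ge> 1 \<and> bb = 2 * k \<and>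
      ((ee = 1 \<and> 1 / (2 * k + 1) \<le> y \<and> y \<le> 1 / (2 * k)) \<or>
       (ee = -1 \<and> 1 / (2 * k) \<le> y \<and> y \<le> 1 / (2 * k - 1))))"

definition is_eicf_expansion :: "real \<Rightarrow> (nat \<Rightarrow> int) \<Rightarrow> (nat \<Rightarrow> int) \<Rightarrow> bool" where
  "is_eicf_expansion y b eta \<longleftrightarrow>
     (\<forall>n\<ge>1. eicf_digit ((TE ^^ (n - 1)) y) (b n) (eta n))"

fun eicf_tail :: "(nat \<Rightarrow> int) \<Rightarrow> (nat \<Rightarrow> int) \<Rightarrow> nat \<Rightarrow> nat \<Rightarrow> rat" where
  "eicf_tail b eta 0 i = of_int (b i)"
| "eicf_tail b eta (Suc r) i = of_int (b i) + of_int (eta i) / eicf_tail b eta r (Suc i)"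

definition eicf_conv :: "(nat \<Rightarrow> int) \<Rightarrow> (nat \<Rightarrow> int) \<Rightarrow> nat \<Rightarrow> rat" where
  "eicf_conv b eta n = 1 / eicf_tail b eta (n - 1) 1"

definition eicf_pq :: "(nat \<Rightarrow> int) \<Rightarrow> (nat \<Rightarrow> int) \<Rightarrow> nat \<Rightarrow> int \<times> int" where
  "eicf_pq b eta n = quotient_of (eicf_conv b eta n)"

definition one_rational :: "int \<Rightarrow> int \<Rightarrow> bool" where
  "one_rational p q \<longleftrightarrow> q > 0 \<and> coprime p q \<and> odd p \<and> odd q"

definition best_1rat_approx :: "real \<Rightarrow> int \<Rightarrow> int \<Rightarrow> bool" where
  "best_1rat_approx x p q \<longleftrightarrow> one_rational p q \<and>
     (\<forall>a b. one_rational a b \<and> (a, b) \<noteq> (p, q) \<and> b \<le> q \<longrightarrow>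
        \<bar>of_int q * x - of_int p\<bar> < \<bar>of_int b * x - of_int a\<bar>)"

definition oocf_D :: "(int \<times> int) set" where
  "oocf_D = {(1, 1)} \<union> {(a, e). a \<ge> 2 \<and> (e = 1 \<or> e = -1)}"

definition oocf_B :: "int \<Rightarrow> int \<Rightarrow> real set" where
  "oocf_B a e = (if e = -1 then (let k = real_of_int (a - 1) in {(k - 1) / k .. (2 * k - 1) / (2 * k + 1)})
                 else (let k = real_of_int a in {(2 * k - 1) / (2 * k + 1) .. k / (k + 1)}))"

(* For x in [0,1), k = floor(1/(1-x)) is the k >= 1 with
   x in [(k-1)/k, k/(k+1)) = B(k+1,-1) \<union> B(k,1); the two formulas agree at the
   common endpoint (2k-1)/(2k+1) (value 1), and at the endpoints k/(k+1) (value 0),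
   so this is exactly the paper's T. *)
definition oocf_T :: "real \<Rightarrow> real" where
  "oocf_T x = (if x = 1 then 1
     else (let k = of_int \<lfloor>1 / (1 - x)\<rfloor> in
       if x \<le> (2 * k - 1) / (2 * k + 1) then (k * x - (k - 1)) / (k - (k + 1) * x)
       else (k - (k + 1) * x) / (k * x - (k - 1))))"

definition is_oocf_expansion :: "real \<Rightarrow> (nat \<Rightarrow> int) \<Rightarrow> (nat \<Rightarrow> int) \<Rightarrow> bool" where
  "is_oocf_expansion x a e \<longleftrightarrow>
     (\<forall>n\<ge>1. (a n, e n) \<in> oocf_D \<and> (oocf_T ^^ (n - 1)) x \<in> oocf_B (a n) (e n))"

fun oocf_tail :: "(nat \<Rightarrow> int) \<Rightarrow> (nat \<Rightarrow> int) \<Rightarrow> nat \<Rightarrow> nat \<Rightarrow> real" where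
  "oocf_tail a e 0 i = of_int (a i) + of_int (e i) / 2"
| "oocf_tail a e (Suc r) i = of_int (a i) + of_int (e i) / (2 - 1 / oocf_tail a e r (Suc i))"

definition oocf_conv :: "(nat \<Rightarrow> int) \<Rightarrow> (nat \<Rightarrow> int) \<Rightarrow> nat \<Rightarrow> real" where
  "oocf_conv a e n = 1 - 1 / oocf_tail a e (n - 1) 1"

end

theory Submission
  imports Defs
begin



fun ep :: "(nat\<Rightarrow>int) \<Rightarrow> (nat\<Rightarrow>int) \<Rightarrow> nat \<Rightarrow> int" where
  "ep b eta 0 = 0"
| "ep b eta (Suc 0) = 1"
| "ep b eta (Suc (Suc n)) = b (Suc (Suc n)) * ep b eta (Suc n) + eta (Suc n) * ep b eta n"

fun eq :: "(nat\<Rightarrow>int) \<Rightarrow> (nat\<Rightarrow>int) \<Rightarrow> nat \<Rightarrow> int" where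
  "eq b eta 0 = 1"
| "eq b eta (Suc 0) = b 1"
| "eq b eta (Suc (Suc n)) = b (Suc (Suc n)) * eq b eta (Suc n) + eta (Suc n) * eq b eta n"

fun fcomp :: "(nat\<Rightarrow>int) \<Rightarrow> (nat\<Rightarrow>int) \<Rightarrow> nat \<Rightarrow> nat \<Rightarrow> rat \<Rightarrow> rat" where
  "fcomp b eta i 0 u = 1 / (of_int (b i) + of_int (eta i) * u)"
| "fcomp b eta i (Suc r) u = 1 / (of_int (b i) + of_int (eta i) * fcomp b eta (Suc i) r u)"

lemma tail_fcomp: "1 / eicf_tail b eta r i = fcomp b eta i r 0"
proof (induction r arbitrary: i)
  case 0 then show ?case by simp
next
  case (Suc r)
  have "1 / eicf_tail b eta (Suc r) i = 1 / (of_int (b i) + of_int (eta i) * (1 / eicf_tail b eta r (Suc i)))"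
    by (simp add: divide_inverse)
  also have "\<dots> = fcomp b eta i (Suc r) 0" using Suc.IH by simp
  finally show ?case .
qed

lemma fcomp_shift: "fcomp b eta i (Suc r) u = fcomp b eta i r (1 / (of_int (b (i + r + 1)) + of_int (eta (i + r + 1)) * u))"
proof (induction r arbitrary: i)
  case 0 then show ?case by simp
next
  case (Suc r)
  show ?case using Suc.IH[of "Suc i"] by simp
qed

locale eicf_ass =
  fixes b eta :: "nat \<Rightarrow> int"
  assumes hb: "\<And>k. k \<ge> 1 \<Longrightarrow> b k \<ge> 2"
    and heta: "\<And>k. k \<ge> 1 \<Longrightarrow> eta k = 1 \<or> eta k = -1"
begin

lemma eq_mono: "eq b eta n \<ge> 1 \<and> eq b eta (Suc n) \<ge> eq b eta n + 1"
proof (induction n)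
  case 0 then show ?case using hb[of 1] by simp
next
  case (Suc n)
  have b2: "b (Suc (Suc n)) \<ge> 2" using hb by simp
  have e: "eta (Suc n) = 1 \<or> eta (Suc n) = -1" using heta by simp
  have "b (Suc (Suc n)) * eq b eta (Suc n) \<ge> 2 * eq b eta (Suc n)"
    using b2 Suc.IH by (intro mult_right_mono) auto
  moreover have "eta (Suc n) * eq b eta n \<ge> - eq b eta n" using e Suc.IH by auto
  moreover have "eq b eta (Suc (Suc n)) = b (Suc (Suc n)) * eq b eta (Suc n) + eta (Suc n) * eq b eta n" by simp
  ultimately show ?case using Suc.IH by linarith
qed

lemma det_ep: "ep b eta n * eq b eta (Suc n) - ep b eta (Suc n) * eq b eta n = 1 \<or>
               ep b eta n * eq b eta (Suc n) - ep b eta (Suc n) * eq b eta n = -1"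
proof (induction n)
  case 0 then show ?case by simp
next
  case (Suc n)
  have "ep b eta (Suc n) * eq b eta (Suc (Suc n)) - ep b eta (Suc (Suc n)) * eq b eta (Suc n)
     = - eta (Suc n) * (ep b eta n * eq b eta (Suc n) - ep b eta (Suc n) * eq b eta n)"
    by (simp add: algebra_simps)
  then show ?case using Suc.IH heta[of "Suc n"] by auto
qed

lemma fcomp_conv: "0 \<le> u \<Longrightarrow> u \<le> 1 \<Longrightarrow> fcomp b eta 1 m u =
   (of_int (eta (Suc m)) * of_int (ep b eta m) * u + of_int (ep b eta (Suc m))) /
   (of_int (eta (Suc m)) * of_int (eq b eta m) * u + of_int (eq b eta (Suc m)))"
proof (induction m arbitrary: u)
  case 0 then show ?case by (simp add: add.commute)
next
  case (Suc m)
  define W where "W = of_int (b (Suc (Suc m))) + of_int (eta (Suc (Suc m))) * u"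
  have b2: "b (Suc (Suc m)) \<ge> 2" using hb by simp
  have "of_int (eta (Suc (Suc m))) * u \<ge> -1" using heta[of "Suc (Suc m)"] Suc.prems by auto
  moreover have "(of_int (b (Suc (Suc m))) :: rat) \<ge> 2" using b2 by simp
  ultimately have W1: "W \<ge> 1" unfolding W_def by linarith
  have v: "0 \<le> 1 / W" "1 / W \<le> 1" using W1 by auto
  have sh: "1 + m + 1 = Suc (Suc m)" by simp
  have "fcomp b eta 1 (Suc m) u = fcomp b eta 1 m (1 / W)"
    unfolding W_def using fcomp_shift[of b eta 1 m u] unfolding sh .
  also have "\<dots> = (of_int (eta (Suc m)) * of_int (ep b eta m) * (1/W) + of_int (ep b eta (Suc m))) /
   (of_int (eta (Suc m)) * of_int (eq b eta m) * (1/W) + of_int (eq b eta (Suc m)))"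
    using Suc.IH[OF v] .
  also have "\<dots> = (of_int (eta (Suc m)) * of_int (ep b eta m) + of_int (ep b eta (Suc m)) * W) /
   (of_int (eta (Suc m)) * of_int (eq b eta m) + of_int (eq b eta (Suc m)) * W)"
  proof -
    have Wn: "W \<noteq> 0" using W1 by auto
    have e1: "of_int (eta (Suc m)) * of_int (ep b eta m) * (1/W) + of_int (ep b eta (Suc m))
       = (of_int (eta (Suc m)) * of_int (ep b eta m) + of_int (ep b eta (Suc m)) * W) / W"
      using Wn by (simp add: field_simps)
    have e2: "of_int (eta (Suc m)) * of_int (eq b eta m) * (1/W) + of_int (eq b eta (Suc m))
       = (of_int (eta (Suc m)) * of_int (eq b eta m) + of_int (eq b eta (Suc m)) * W) / W"
      using Wn by (simp add: field_simps)
    show ?thesis unfolding e1 e2 using Wn by simp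
  qed
  also have "\<dots> = (of_int (eta (Suc (Suc m))) * of_int (ep b eta (Suc m)) * u + of_int (ep b eta (Suc (Suc m)))) /
   (of_int (eta (Suc (Suc m))) * of_int (eq b eta (Suc m)) * u + of_int (eq b eta (Suc (Suc m))))"
  proof -
    have n1: "of_int (eta (Suc m)) * of_int (ep b eta m) + of_int (ep b eta (Suc m)) * W =
      (of_int (eta (Suc (Suc m))) * of_int (ep b eta (Suc m)) * u + of_int (ep b eta (Suc (Suc m))) :: rat)"
      unfolding W_def by (simp add: algebra_simps)
    have n2: "of_int (eta (Suc m)) * of_int (eq b eta m) + of_int (eq b eta (Suc m)) * W =
      (of_int (eta (Suc (Suc m))) * of_int (eq b eta (Suc m)) * u + of_int (eq b eta (Suc (Suc m))) :: rat)"
      unfolding W_def by (simp add: algebra_simps)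
    show ?thesis unfolding n1 n2 ..
  qed
  finally show ?case .
qed

lemma conv_eq: "n \<ge> 1 \<Longrightarrow> eicf_conv b eta n = of_int (ep b eta n) / of_int (eq b eta n)"
proof -
  assume "n \<ge> 1"
  then obtain m where m: "n = Suc m" by (cases n) auto
  have "eicf_conv b eta n = 1 / eicf_tail b eta m 1" unfolding eicf_conv_def m by simp
  also have "\<dots> = fcomp b eta 1 m 0" by (rule tail_fcomp)
  also have "\<dots> = of_int (ep b eta n) / of_int (eq b eta n)" using fcomp_conv[of 0 m] unfolding m by simp
  finally show ?thesis .
qed

lemma quotient_of_intdiv: "Q > 0 \<Longrightarrow> coprime P Q \<Longrightarrow> quotient_of (of_int P / of_int Q) = (P, Q)"
  unfolding quotient_of_def
  by (rule the1_equality[OF quotient_of_unique]) (simp add: Fract_of_int_quotient)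

lemma coprime_ep: "coprime (ep b eta n) (eq b eta n)"
proof -
  have u: "ep b eta n * eq b eta (Suc n) - ep b eta (Suc n) * eq b eta n dvd 1"
    using det_ep[of n] by auto
  show ?thesis
  proof (rule coprimeI)
    fix c assume "c dvd ep b eta n" "c dvd eq b eta n"
    then have "c dvd ep b eta n * eq b eta (Suc n) - ep b eta (Suc n) * eq b eta n" by simp
    with u show "is_unit c" using dvd_trans by blast
  qed
qed

lemma pq_eq: "n \<ge> 1 \<Longrightarrow> eicf_pq b eta n = (ep b eta n, eq b eta n)"
  unfolding eicf_pq_def conv_eq
  apply (rule quotient_of_intdiv)
  using eq_mono[of n] coprime_ep by auto

end



lemma irr_inv: "(y::real) \<notin> \<rat> \<Longrightarrow> 1 / y \<notin> \<rat>"
  by (metis Rats_1 Rats_divide div_by_1 divide_divide_eq_right mult_1)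

lemma TE_step:
  assumes irr: "y \<notin> \<rat>" and d: "eicf_digit y bb ee"
  shows "1 / y = of_int bb + of_int ee * TE y \<and> 0 < TE y \<and> TE y < 1 \<and> TE y \<notin> \<rat> \<and> bb \<ge> 2 \<and> (ee = 1 \<or> ee = -1)"
proof -
  obtain k :: int where k: "k \<ge> 1" "bb = 2 * k" and
    c: "(ee = 1 \<and> 1 / (2 * k + 1) \<le> y \<and> y \<le> 1 / (2 * k)) \<or>
       (ee = -1 \<and> 1 / (2 * k) \<le> y \<and> y \<le> 1 / (2 * k - 1))"
    using d unfolding eicf_digit_def by auto
  have iy: "1 / y \<notin> \<rat>" using irr_inv[OF irr] .
  have y0: "y \<noteq> 0" using irr by auto
  have nint: "\<And>j::int. 1 / y \<noteq> of_int j" using iy Rats_of_int by metis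
  show ?thesis
  proof (cases "ee = 1")
    case True
    then have yb: "1 / (2 * k + 1) \<le> y" "y \<le> 1 / (2 * k)" using c by auto
    have kpos: "(0::real) < 2 * k" using k by simp
    have ypos: "y > 0" using yb(1) k by (smt (verit) divide_pos_pos of_int_pos)
    have l1: "2 * k \<le> 1 / y" using yb(2) ypos kpos by (simp add: field_simps)
    have l2: "1 / y \<le> 2 * k + 1" using yb(1) ypos kpos by (simp add: field_simps)
    have l1': "2 * k < 1 / y" using l1 nint[of "2*k"] by (simp add: order_le_less)
    have l2': "1 / y < 2 * k + 1" using l2 nint[of "2*k+1"] by (simp add: order_le_less)
    have fl: "\<lfloor>1 / y\<rfloor> = 2 * k" using l1' l2' by (simp add: floor_eq_iff)
    have te: "TE y = 1 / y - 2 * k" unfolding TE_def using y0 fl by simp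
    have "TE y \<notin> \<rat>"
    proof
      assume "TE y \<in> \<rat>"
      then have "TE y + of_int (2*k) \<in> \<rat>" by (simp add: Rats_add)
      then show False using iy te by simp
    qed
    then show ?thesis using te l1' l2' k True by auto
  next
    case False
    then have e: "ee = -1" and yb: "1 / (2 * k) \<le> y" "y \<le> 1 / (2 * k - 1)" using c by auto
    have kpos: "(0::real) < 2 * k - 1" using k by simp
    have ypos: "y > 0" using yb(1) k by (smt (verit) divide_pos_pos of_int_pos)
    have l1: "2 * k - 1 \<le> 1 / y" using yb(2) ypos kpos by (simp add: field_simps)
    have l2: "1 / y \<le> 2 * k" using yb(1) ypos kpos by (simp add: field_simps)
    have l1': "2 * k - 1 < 1 / y" using l1 nint[of "2*k-1"] by (simp add: order_le_less)
    have l2': "1 / y < 2 * k" using l2 nint[of "2*k"] by (simp add: order_le_less)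
    have fl: "\<lfloor>1 / y\<rfloor> = 2 * k - 1" using l1' l2' by (simp add: floor_eq_iff)
    have odd: "\<not> even (2 * k - 1)" by simp
    have te: "TE y = 2 * k - 1 / y" unfolding TE_def using y0 fl odd by simp
    have "TE y \<notin> \<rat>"
    proof
      assume "TE y \<in> \<rat>"
      then have "of_int (2*k) - TE y \<in> \<rat>" by (simp add: Rats_diff)
      then show False using iy te by simp
    qed
    then show ?thesis using te l1' l2' k e by auto
  qed
qed



lemma delta_rec:
  fixes ys :: "nat \<Rightarrow> real"
  assumes rec: "\<And>m. 1 / ys m = of_int (b (Suc m)) + of_int (eta (Suc m)) * ys (Suc m)"
    and nz: "\<And>m. ys m \<noteq> 0"
    and e: "\<And>m. eta (Suc m) = 1 \<or> eta (Suc m) = -1"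
  shows "of_int (eq b eta (Suc m)) * ys 0 - of_int (ep b eta (Suc m)) =
         - of_int (eta (Suc m)) * ys (Suc m) * (of_int (eq b eta m) * ys 0 - of_int (ep b eta m))"
proof (induction m rule: nat_less_induct)
  case (1 m)
  define D where "D k = of_int (eq b eta k) * ys 0 - of_int (ep b eta k)" for k
  show ?case
  proof (cases m)
    case 0
    have "1 = ys 0 * (of_int (b 1) + of_int (eta 1) * ys 1)"
      using rec[of 0] nz[of 0] by (simp add: field_simps)
    then show ?thesis using 0 by (simp add: algebra_simps)
  next
    case (Suc m')
    have IH: "D (Suc m') = - of_int (eta (Suc m')) * ys (Suc m') * D m'"
      using 1[rule_format, of m'] Suc unfolding D_def by simp
    have ee: "of_int (eta (Suc m')) * of_int (eta (Suc m')) = (1::real)" using e[of m'] by auto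
    have h: "of_int (eta (Suc m')) * D m' = - D (Suc m') / ys (Suc m')"
      using IH nz[of "Suc m'"] ee by (simp add: field_simps)
    have r: "D (Suc (Suc m')) = of_int (b (Suc (Suc m'))) * D (Suc m') + of_int (eta (Suc m')) * D m'"
      unfolding D_def by (simp add: algebra_simps)
    have "D (Suc (Suc m')) = D (Suc m') * (of_int (b (Suc (Suc m'))) - 1 / ys (Suc m'))"
      unfolding r h by (simp add: algebra_simps)
    also have "\<dots> = D (Suc m') * (- of_int (eta (Suc (Suc m'))) * ys (Suc (Suc m')))"
      using rec[of "Suc m'"] by simp
    finally show ?thesis unfolding D_def Suc by (simp add: algebra_simps)
  qed
qed



lemma eicf_ineq:
  fixes s t q q0 \<eta> :: int and u :: real
  assumes "odd s" "even t" "(s, t) \<noteq> (1, 0)" "0 < s*q + t*q0" "s*q + t*q0 \<le> q"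
    "1 \<le> q0" "q0 < q" "0 < u" "u < 1" "\<eta> = 1 \<or> \<eta> = -1"
  shows "u < \<bar>t - \<eta>*s*u\<bar>"
proof -
  have t0: "t \<noteq> 0"
  proof
    assume "t = 0"
    then have "0 < s * q" "s * q \<le> 1 * q" using assms by auto
    moreover have qp: "q > 0" using assms by linarith
    ultimately have "s > 0" "s \<le> 1" by (simp_all add: zero_less_mult_iff)
    then have "s = 1" by simp
    then show False using \<open>t = 0\<close> assms(3) by simp
  qed
  have s0: "s \<noteq> 0" using assms(1) by auto
  have t2: "\<bar>t\<bar> \<ge> 2"
  proof -
    obtain k where "t = 2 * k" using assms(2) by (auto elim: evenE)
    then show ?thesis using t0 by auto
  qed
  consider "s > 0" "t < 0" | "s < 0" "t > 0"
  proof -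
    have "\<not> (s > 0 \<and> t > 0)"
    proof
      assume "s > 0 \<and> t > 0"
      then have "s * q \<ge> q" "t * q0 > 0" using assms by auto
      then show False using assms(5) by linarith
    qed
    moreover have "\<not> (s < 0 \<and> t < 0)"
    proof
      assume "s < 0 \<and> t < 0"
      then have "s * q < 0" "t * q0 < 0" using assms by (auto simp: mult_neg_pos)
      then show False using assms(4) by linarith
    qed
    ultimately show ?thesis using that s0 t0 by linarith
  qed
  then show ?thesis
  proof cases
    case 1
    show ?thesis
    proof (cases "\<eta> = 1")
      case True
      have "t - \<eta>*s*u \<le> t" using True 1 assms by simp
      then show ?thesis using t2 1 assms by linarith
    next
      case False
      then have e: "\<eta> = -1" using assms by auto
      show ?thesis
      proof (rule ccontr)
        assume "\<not> ?thesis"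
        then have "t + s*u \<ge> -u" using e by auto
        then have "real_of_int (-t) \<le> u * (s+1)" by (simp add: algebra_simps)
        also have "\<dots> < s + 1" using assms 1 by simp
        finally have "-t \<le> s" by linarith
        moreover have "-t \<noteq> s" using assms(1,2) by auto
        ultimately have ts: "-t \<le> s - 1" by linarith
        have "(s - 1) * q \<le> (-t) * q0" using assms(5) by (simp add: algebra_simps)
        also have "\<dots> \<le> (s - 1) * q0" using ts assms(6) by (intro mult_right_mono) auto
        finally have "(s - 1) * q \<le> (s - 1) * q0" .
        moreover have "s - 1 > 0" using ts 1 by linarith
        ultimately have "q \<le> q0" by simp
        then show False using assms by simp
      qed
    qed
  next
    case 2
    show ?thesis
    proof (cases "\<eta> = 1")
      case True
      have "t - \<eta>*s*u \<ge> t" using True 2 assms by (simp add: mult_nonpos_nonneg)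
      then show ?thesis using t2 2 assms by linarith
    next
      case False
      then have e: "\<eta> = -1" using assms by auto
      show ?thesis
      proof (rule ccontr)
        assume "\<not> ?thesis"
        then have "t + s*u \<le> u" using e by auto
        then have "real_of_int t \<le> u * (1 - s)" by (simp add: algebra_simps)
        also have "\<dots> < 1 - s" using assms 2 by simp
        finally have ts: "t \<le> -s" by linarith
        have "t * q0 < t * q" using assms 2 by simp
        also have "\<dots> \<le> (-s) * q" using ts assms by (intro mult_right_mono) auto
        finally show False using assms(4) by (simp add: algebra_simps)
      qed
    qed
  qed
qed




lemma key_ineq2:
  fixes \<sigma> \<rho> s s' :: int and w N :: real
  assumes par: "odd (\<sigma> + \<rho>)" and b0: "0 < \<sigma>*s + \<rho>*s'" and b1: "\<sigma>*s + \<rho>*s' < s'"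
    and s1: "1 \<le> s" and ss: "s \<le> s'" and w: "0 < w" and N: "N \<le> 0 \<or> (0 \<le> N \<and> N \<le> w)"
  shows "w \<le> \<bar>\<sigma>*w + \<rho>*N\<bar>"
proof -
  have s'1: "1 \<le> s'" using s1 ss by linarith
  show ?thesis
  proof (cases "\<rho> = 0")
    case True
    then have "\<sigma> \<noteq> 0" using par by auto
    then have "\<bar>\<sigma>\<bar> \<ge> 1" by linarith
    then have "w \<le> \<bar>\<sigma>\<bar> * w" using w by (simp add: mult_le_cancel_right1)
    then show ?thesis using True w by (simp add: abs_mult)
  next
    case r0: False
    have sg0: "\<sigma> \<noteq> 0"
    proof
      assume "\<sigma> = 0"
      then have "0 < \<rho> * s'" "\<rho> * s' < 1 * s'" using b0 b1 by auto
      then have "\<rho> > 0" "\<rho> < 1" using s'1 by (simp_all add: zero_less_mult_iff)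
      then show False by simp
    qed
    consider "\<sigma> > 0" "\<rho> < 0" | "\<sigma> < 0" "\<rho> > 0"
    proof -
      have "\<not> (\<sigma> > 0 \<and> \<rho> > 0)"
      proof
        assume h: "\<sigma> > 0 \<and> \<rho> > 0"
        then have "\<sigma> * s > 0" "\<rho> * s' \<ge> 1 * s'" using s1 s'1 by auto
        then show False using b1 by simp
      qed
      moreover have "\<not> (\<sigma> < 0 \<and> \<rho> < 0)"
      proof
        assume h: "\<sigma> < 0 \<and> \<rho> < 0"
        then have "\<sigma> * s < 0" "\<rho> * s' < 0" using s1 s'1 by (auto simp: mult_neg_pos)
        then show False using b0 by linarith
      qed
      ultimately show ?thesis using that sg0 r0 by linarith
    qed
    then show ?thesis
    proof cases
      case 1
      show ?thesis
      proof (cases "N \<le> 0")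
        case True
        have "\<rho> * N \<ge> 0" using 1 True by (simp add: mult_nonpos_nonpos)
        moreover have "\<sigma> * w \<ge> 1 * w" using 1 w by (intro mult_right_mono) auto
        ultimately show ?thesis by linarith
      next
        case False
        then have N': "0 \<le> N" "N \<le> w" using N by auto
        have "(-\<rho>) * s \<le> (-\<rho>) * s'" using 1 ss by (intro mult_left_mono) auto
        then have "(-\<rho>) * s < \<sigma> * s" using b0 by (simp add: algebra_simps)
        then have "-\<rho> < \<sigma>" using mult_right_less_imp_less[of "-\<rho>" s \<sigma>] s1 by auto
        then have sr: "\<sigma> + \<rho> \<ge> 1" by linarith
        have "real_of_int \<rho> * N \<ge> \<rho> * w" using 1 N' by (intro mult_left_mono_neg) auto
        moreover have "(\<sigma> + \<rho>) * w \<ge> 1 * w" using sr w by (intro mult_right_mono) auto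
        ultimately show ?thesis by (simp add: algebra_simps)
      qed
    next
      case 2
      show ?thesis
      proof (cases "N \<le> 0")
        case True
        have "\<rho> * N \<le> 0" using 2 True by (simp add: mult_nonneg_nonpos)
        moreover have "(-\<sigma>) * w \<ge> 1 * w" using 2 w by (intro mult_right_mono) auto
        ultimately show ?thesis by linarith
      next
        case False
        then have N': "0 \<le> N" "N \<le> w" using N by auto
        have "(\<rho> - 1) * s' < (-\<sigma>) * s" using b1 by (simp add: algebra_simps)
        also have "\<dots> \<le> (-\<sigma>) * s'" using 2 ss by (intro mult_left_mono) auto
        finally have "\<rho> - 1 < -\<sigma>" using mult_right_less_imp_less[of "\<rho> - 1" s' "-\<sigma>"] s'1 by auto
        moreover have "\<rho> \<noteq> -\<sigma>" using par by auto
        ultimately have sr: "\<sigma> + \<rho> \<le> -1" by linarith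
        have "real_of_int \<rho> * N \<le> \<rho> * w" using 2 N' by (intro mult_left_mono) auto
        moreover have "(-(\<sigma> + \<rho>)) * w \<ge> 1 * w" using sr w by (intro mult_right_mono) auto
        ultimately show ?thesis by (simp add: algebra_simps)
      qed
    qed
  qed
qed

lemma inD: "(\<alpha>, \<epsilon>) \<in> oocf_D \<Longrightarrow> \<alpha> \<ge> 1 \<and> (\<epsilon> = 1 \<or> \<epsilon> = -1) \<and> \<alpha> + \<epsilon> \<ge> 1"
  unfolding oocf_D_def by auto

lemma B_cases:
  assumes "(\<alpha>, \<epsilon>) \<in> oocf_D" "t \<in> oocf_B \<alpha> \<epsilon>"
  shows "(\<epsilon> = -1 \<and> \<alpha> \<ge> 2 \<and> (real_of_int \<alpha> - 2) / (real_of_int \<alpha> - 1) \<le> t \<and> t \<le> (2 * real_of_int \<alpha> - 3) / (2 * real_of_int \<alpha> - 1))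
       \<or> (\<epsilon> = 1 \<and> \<alpha> \<ge> 1 \<and> (2 * real_of_int \<alpha> - 1) / (2 * real_of_int \<alpha> + 1) \<le> t \<and> t \<le> real_of_int \<alpha> / (real_of_int \<alpha> + 1))"
proof (cases "\<epsilon> = -1")
  case True
  then have "\<alpha> \<ge> 2" using assms(1) unfolding oocf_D_def by auto
  moreover have "(real_of_int \<alpha> - 1 - 1) = real_of_int \<alpha> - 2" "2 * (real_of_int \<alpha> - 1) - 1 = 2 * real_of_int \<alpha> - 3"
     "2 * (real_of_int \<alpha> - 1) + 1 = 2 * real_of_int \<alpha> - 1" by simp_all
  ultimately show ?thesis using assms(2) True unfolding oocf_B_def Let_def by auto
next
  case False
  then have "\<epsilon> = 1" "\<alpha> \<ge> 1" using assms(1) unfolding oocf_D_def by auto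
  then show ?thesis using assms(2) unfolding oocf_B_def Let_def by auto
qed

lemma B_range:
  assumes "(\<alpha>, \<epsilon>) \<in> oocf_D" "t \<in> oocf_B \<alpha> \<epsilon>"
  shows "0 \<le> t \<and> t < 1"
  using B_cases[OF assms]
proof
  assume h: "\<epsilon> = -1 \<and> \<alpha> \<ge> 2 \<and> (real_of_int \<alpha> - 2) / (real_of_int \<alpha> - 1) \<le> t \<and> t \<le> (2 * real_of_int \<alpha> - 3) / (2 * real_of_int \<alpha> - 1)"
  then have a2: "real_of_int \<alpha> \<ge> 2" by simp
  have "0 \<le> (real_of_int \<alpha> - 2) / (real_of_int \<alpha> - 1)" using a2 by simp
  moreover have "(2 * real_of_int \<alpha> - 3) / (2 * real_of_int \<alpha> - 1) < 1" using a2 by simp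
  ultimately show ?thesis using h by linarith
next
  assume h: "\<epsilon> = 1 \<and> \<alpha> \<ge> 1 \<and> (2 * real_of_int \<alpha> - 1) / (2 * real_of_int \<alpha> + 1) \<le> t \<and> t \<le> real_of_int \<alpha> / (real_of_int \<alpha> + 1)"
  then have a2: "real_of_int \<alpha> \<ge> 1" by simp
  have "0 \<le> (2 * real_of_int \<alpha> - 1) / (2 * real_of_int \<alpha> + 1)" using a2 by simp
  moreover have "real_of_int \<alpha> / (real_of_int \<alpha> + 1) < 1" using a2 by simp
  ultimately show ?thesis using h by linarith
qed




definition gfun :: "int \<Rightarrow> int \<Rightarrow> real \<Rightarrow> real" where
  "gfun \<alpha> \<epsilon> u = (of_int (\<alpha> - 1) * u + of_int (\<alpha> + \<epsilon> - 1)) / (of_int \<alpha> * u + of_int (\<alpha> + \<epsilon>))"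

lemma frac_sub: "(M::real) \<noteq> 0 \<Longrightarrow> (P * (N / M) + Q) / (R * (N / M) + S) = (P * N + Q * M) / (R * N + S * M)"
proof -
  assume M: "M \<noteq> 0"
  have 1: "P * (N / M) + Q = (P * N + Q * M) / M" using M by (simp add: field_simps)
  have 2: "R * (N / M) + S = (R * N + S * M) / M" using M by (simp add: field_simps)
  show ?thesis unfolding 1 2 using M by simp
qed

lemma g_T:
  assumes D: "(\<alpha>, \<epsilon>) \<in> oocf_D" and B: "t \<in> oocf_B \<alpha> \<epsilon>"
  shows "gfun \<alpha> \<epsilon> (oocf_T t) = t"
proof -
  have tr: "0 \<le> t" "t < 1" using B_range[OF D B] by auto
  have t1: "t \<noteq> 1" using tr by simp
  have omt: "1 - t > 0" using tr by simp
  define K where "K = real_of_int \<alpha>"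
  show ?thesis using B_cases[OF D B]
  proof
    assume h: "\<epsilon> = -1 \<and> \<alpha> \<ge> 2 \<and> (real_of_int \<alpha> - 2) / (real_of_int \<alpha> - 1) \<le> t \<and> t \<le> (2 * real_of_int \<alpha> - 3) / (2 * real_of_int \<alpha> - 1)"
    then have K2: "K \<ge> 2" and e: "\<epsilon> = -1" unfolding K_def by auto
    have lo: "(K - 1) * t \<ge> K - 2" using h K2 unfolding K_def[symmetric] by (simp add: field_simps)
    have hi: "(2*K - 1) * t \<le> 2*K - 3" using h K2 unfolding K_def[symmetric] by (simp add: field_simps)
    have hi2: "K * t < K - 1"
    proof -
      have "2 * (K * t) * (2*K - 1) = 2 * K * ((2*K - 1) * t)" by (simp add: algebra_simps)
      also have "\<dots> \<le> 2 * K * (2*K - 3)" using hi K2 by (intro mult_left_mono) auto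
      also have "\<dots> < 2 * (K - 1) * (2*K - 1)" by (simp add: algebra_simps)
      finally have "(K * t) * (2 * (2*K - 1)) < (K - 1) * (2 * (2*K - 1))" by (simp add: algebra_simps)
      then show ?thesis using K2 by (simp add: mult_less_cancel_right)
    qed
    have fl1: "K - 1 \<le> 1 / (1 - t)" using lo omt by (simp add: field_simps)
    have fl2: "1 / (1 - t) < K" using hi2 omt by (simp add: field_simps)
    have fl: "\<lfloor>1 / (1 - t)\<rfloor> = \<alpha> - 1" using fl1 fl2 unfolding K_def by (simp add: floor_eq_iff)
    have cond: "t \<le> (2 * (K - 1) - 1) / (2 * (K - 1) + 1)"
      using h unfolding K_def by (simp add: algebra_simps)
    have Tt: "oocf_T t = ((K - 1) * t - (K - 1 - 1)) / ((K - 1) - (K - 1 + 1) * t)"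
      unfolding oocf_T_def Let_def using t1 fl cond unfolding K_def by simp
    have M: "(K - 1) - K * t > 0" using hi2 by simp
    have "gfun \<alpha> \<epsilon> (oocf_T t) = ((K - 1) * (((K - 1) * t - (K - 2)) / ((K - 1) - K * t)) + (K - 2)) /
        (K * (((K - 1) * t - (K - 2)) / ((K - 1) - K * t)) + (K - 1))"
      unfolding gfun_def Tt e K_def by (simp add: algebra_simps)
    also have "\<dots> = ((K - 1) * ((K - 1) * t - (K - 2)) + (K - 2) * ((K - 1) - K * t)) /
        (K * ((K - 1) * t - (K - 2)) + (K - 1) * ((K - 1) - K * t))"
      using M by (intro frac_sub) simp
    also have "\<dots> = t" by (simp add: algebra_simps)
    finally show ?thesis .
  next
    assume h: "\<epsilon> = 1 \<and> \<alpha> \<ge> 1 \<and> (2 * real_of_int \<alpha> - 1) / (2 * real_of_int \<alpha> + 1) \<le> t \<and> t \<le> real_of_int \<alpha> / (real_of_int \<alpha> + 1)"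
    then have K1: "K \<ge> 1" and e: "\<epsilon> = 1" unfolding K_def by auto
    have lo: "(2*K + 1) * t \<ge> 2*K - 1" using h K1 unfolding K_def[symmetric] by (simp add: field_simps)
    have hi: "(K + 1) * t \<le> K" using h K1 unfolding K_def[symmetric] by (simp add: field_simps)
    show ?thesis
    proof (cases "(K + 1) * t = K")
      case True
      then have tK: "t = K / (K + 1)" using K1 by (simp add: field_simps)
      have "1 - t = 1 / (K + 1)" using tK K1 by (simp add: field_simps)
      then have "1 / (1 - t) = K + 1" by simp
      then have fl: "\<lfloor>1 / (1 - t)\<rfloor> = \<alpha> + 1" unfolding K_def by simp
      have cond: "t \<le> (2 * (K + 1) - 1) / (2 * (K + 1) + 1)"
        unfolding tK using K1 by (simp add: field_simps)
      have "oocf_T t = ((K + 1) * t - (K + 1 - 1)) / ((K + 1) - (K + 1 + 1) * t)"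
        unfolding oocf_T_def Let_def using t1 fl cond unfolding K_def by simp
      also have "\<dots> = 0" using True by simp
      finally have T0: "oocf_T t = 0" .
      have "gfun \<alpha> \<epsilon> 0 = K / (K + 1)" unfolding gfun_def e K_def by simp
      then show ?thesis unfolding T0 tK[symmetric] .
    next
      case False
      then have hi': "(K + 1) * t < K" using hi by simp
      have lo2: "K * t \<ge> K - 1"
      proof -
        have "(K * t) * (2*K + 1) = K * ((2*K + 1) * t)" by (simp add: algebra_simps)
        also have "\<dots> \<ge> K * (2*K - 1)" using lo K1 by (intro mult_left_mono) auto
        finally have "(K * t) * (2*K + 1) \<ge> (K - 1) * (2*K + 1)" by (simp add: algebra_simps)
        then show ?thesis using K1 by (simp add: mult_le_cancel_right)
      qed
      have fl1: "K \<le> 1 / (1 - t)" using lo2 omt by (simp add: field_simps)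
      have fl2: "1 / (1 - t) < K + 1" using hi' omt by (simp add: field_simps)
      have fl: "\<lfloor>1 / (1 - t)\<rfloor> = \<alpha>" using fl1 fl2 unfolding K_def by (simp add: floor_eq_iff)
      show ?thesis
      proof (cases "t \<le> (2 * K - 1) / (2 * K + 1)")
        case True
        then have tE: "t = (2 * K - 1) / (2 * K + 1)" using h unfolding K_def by simp
        have "oocf_T t = (K * t - (K - 1)) / (K - (K + 1) * t)"
          unfolding oocf_T_def Let_def using t1 fl True unfolding K_def by simp
        also have "\<dots> = 1" unfolding tE using K1 by (simp add: field_simps)
        finally have T1: "oocf_T t = 1" .
        have "gfun \<alpha> \<epsilon> 1 = (2 * K - 1) / (2 * K + 1)" unfolding gfun_def e K_def by (simp add: algebra_simps)
        then show ?thesis unfolding T1 tE[symmetric] .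
      next
        case False
        have Tt: "oocf_T t = (K - (K + 1) * t) / (K * t - (K - 1))"
          unfolding oocf_T_def Let_def using t1 fl False unfolding K_def by simp
        have M: "K * t - (K - 1) > 0"
        proof -
          have "t > (2 * K - 1) / (2 * K + 1)" using False by simp
          then have "(2*K + 1) * t > 2*K - 1" using K1 by (simp add: field_simps)
          then have "K * (2*K - 1) < K * ((2*K + 1) * t)" using K1 by (intro mult_strict_left_mono) auto
          moreover have "(K * t) * (2*K + 1) = K * ((2*K + 1) * t)" by (simp add: algebra_simps)
          moreover have "(K - 1) * (2*K + 1) < K * (2*K - 1)" by (simp add: algebra_simps)
          ultimately have "(K - 1) * (2*K + 1) < (K * t) * (2*K + 1)" by linarith
          then show ?thesis using K1 mult_right_less_imp_less[of "K - 1" "2*K+1" "K*t"] by auto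
        qed
        have "gfun \<alpha> \<epsilon> (oocf_T t) = ((K - 1) * ((K - (K + 1) * t) / (K * t - (K - 1))) + K) /
            (K * ((K - (K + 1) * t) / (K * t - (K - 1))) + (K + 1))"
          unfolding gfun_def Tt e K_def by (simp add: algebra_simps)
        also have "\<dots> = ((K - 1) * (K - (K + 1) * t) + K * (K * t - (K - 1))) /
            (K * (K - (K + 1) * t) + (K + 1) * (K * t - (K - 1)))"
          using M by (intro frac_sub) simp
        also have "\<dots> = t" by (simp add: algebra_simps)
        finally show ?thesis .
      qed
    qed
  qed
qed




lemma oocf_key:
  fixes A B C D \<alpha> \<epsilon> a b :: int and t x :: real
  assumes C0: "C \<ge> 0" and D1: "D \<ge> 1" and det: "A*D - B*C = 1 \<or> A*D - B*C = -1"
    and xr: "x = (of_int A * t + of_int B) / (of_int C * t + of_int D)"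
    and Dm: "(\<alpha>, \<epsilon>) \<in> oocf_D" and Bm: "t \<in> oocf_B \<alpha> \<epsilon>"
    and oa: "odd a" and ob: "odd b" and orr: "odd (A + B)" and os: "odd (C + D)"
    and b0: "0 < b" and b1: "b < (2*\<alpha>+\<epsilon>-2)*C + (2*\<alpha>+\<epsilon>)*D"
  shows "\<bar>of_int (C + D) * x - of_int (A + B)\<bar> \<le> \<bar>of_int b * x - of_int a\<bar>"
proof -
  define r where "r = A + B"
  define s where "s = C + D"
  define r' where "r' = (2*\<alpha>+\<epsilon>-2)*A + (2*\<alpha>+\<epsilon>)*B"
  define s' where "s' = (2*\<alpha>+\<epsilon>-2)*C + (2*\<alpha>+\<epsilon>)*D"
  define d where "d = A*D - B*C"
  have e: "\<epsilon> = 1 \<or> \<epsilon> = -1" and a1: "\<alpha> \<ge> 1" using inD[OF Dm] by auto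
  have a2: "\<epsilon> = -1 \<Longrightarrow> \<alpha> \<ge> 2" using Dm unfolding oocf_D_def by auto
  have rr: "r' = r + 2*((\<alpha>-1)*A + \<alpha>*B) \<or> r' = r + 2*((\<alpha>-2)*A + (\<alpha>-1)*B)"
    using e unfolding r'_def r_def by (auto simp: algebra_simps)
  have ss: "s' = s + 2*((\<alpha>-1)*C + \<alpha>*D) \<or> s' = s + 2*((\<alpha>-2)*C + (\<alpha>-1)*D)"
    using e unfolding s'_def s_def by (auto simp: algebra_simps)
  have or': "odd r'" using rr orr unfolding r_def by auto
  have os': "odd s'" using ss os unfolding s_def by auto
  have orr2: "odd r" "odd s" using orr os unfolding r_def s_def by auto
  have E: "r*s' - s*r' = 2*d" unfolding r_def s_def r'_def s'_def d_def by (simp add: algebra_simps)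
  have dd: "d*d = 1" using det unfolding d_def by auto
  have "even (a*s' - b*r')" using oa ob or' os' by simp
  then obtain \<sigma>0 where s0: "a*s' - b*r' = 2*\<sigma>0" by (rule evenE)
  have "even (b*r - a*s)" using oa ob orr2 by simp
  then obtain \<rho>0 where r0: "b*r - a*s = 2*\<rho>0" by (rule evenE)
  define \<sigma> where "\<sigma> = d*\<sigma>0"
  define \<rho> where "\<rho> = d*\<rho>0"
  have "2*(\<sigma>0*r + \<rho>0*r') = (a*s' - b*r')*r + (b*r - a*s)*r'" unfolding s0 r0 by (simp add: algebra_simps)
  also have "\<dots> = a*(r*s' - s*r')" by (simp add: algebra_simps)
  finally have "\<sigma>0*r + \<rho>0*r' = a*d" unfolding E by simp
  then have ha: "a = \<sigma>*r + \<rho>*r'" unfolding \<sigma>_def \<rho>_def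
    by (metis (no_types, lifting) dd distrib_left mult.assoc mult.commute mult_1)
  have "2*(\<sigma>0*s + \<rho>0*s') = (a*s' - b*r')*s + (b*r - a*s)*s'" unfolding s0 r0 by (simp add: algebra_simps)
  also have "\<dots> = b*(r*s' - s*r')" by (simp add: algebra_simps)
  finally have "\<sigma>0*s + \<rho>0*s' = b*d" unfolding E by simp
  then have hb: "b = \<sigma>*s + \<rho>*s'" unfolding \<sigma>_def \<rho>_def
    by (metis (no_types, lifting) dd distrib_left mult.assoc mult.commute mult_1)
  have par: "odd (\<sigma> + \<rho>)"
  proof
    assume "even (\<sigma> + \<rho>)"
    then have "even (\<sigma>*r + \<rho>*r')" using orr2 or' by auto
    then show False using ha oa by simp
  qed
  have tr: "0 \<le> t" "t < 1" using B_range[OF Dm Bm] by auto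
  have den: "of_int C * t + of_int D > 0" using C0 D1 tr by (smt (verit) of_int_nonneg mult_nonneg_nonneg of_int_1_le_iff)
  define \<Delta> where "\<Delta> = of_int C * x - of_int A"
  have xx: "x * (of_int C * t + of_int D) = of_int A * t + of_int B" using xr den by simp
  have hD: "of_int D * x - of_int B = - t * \<Delta>" unfolding \<Delta>_def using xx by (simp add: algebra_simps)
  define N where "N = of_int (2*\<alpha>+\<epsilon>-2) - of_int (2*\<alpha>+\<epsilon>) * t"
  have dr: "of_int s * x - of_int r = (1 - t) * \<Delta>"
    unfolding s_def r_def using hD unfolding \<Delta>_def by (simp add: algebra_simps)
  have "of_int s' * x - of_int r' = of_int (2*\<alpha>+\<epsilon>-2) * \<Delta> + of_int (2*\<alpha>+\<epsilon>) * (of_int D * x - of_int B)"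
    unfolding s'_def r'_def \<Delta>_def by (simp add: algebra_simps)
  then have dr': "of_int s' * x - of_int r' = N * \<Delta>"
    unfolding hD N_def by (simp add: algebra_simps)
  have "of_int b * x - of_int a = of_int \<sigma> * (of_int s * x - of_int r) + of_int \<rho> * (of_int s' * x - of_int r')"
    unfolding ha hb by (simp add: algebra_simps)
  also have "\<dots> = \<Delta> * (of_int \<sigma> * (1 - t) + of_int \<rho> * N)" unfolding dr dr' by (simp add: algebra_simps)
  finally have bx: "of_int b * x - of_int a = \<Delta> * (of_int \<sigma> * (1 - t) + of_int \<rho> * N)" .
  have s1: "1 \<le> s" using C0 D1 unfolding s_def by simp
  have sle: "s \<le> s'"
  proof -
    have "s' - s = (2*\<alpha>+\<epsilon>-3)*C + (2*\<alpha>+\<epsilon>-1)*D" unfolding s_def s'_def by (simp add: algebra_simps)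
    moreover have "2*\<alpha>+\<epsilon>-3 \<ge> 0" "2*\<alpha>+\<epsilon>-1 \<ge> 0" using e a1 a2 by auto
    ultimately show ?thesis using C0 D1 by (smt (verit) mult_nonneg_nonneg)
  qed
  have Nc: "N \<le> 0 \<or> (0 \<le> N \<and> N \<le> 1 - t)"
    using B_cases[OF Dm Bm]
  proof
    assume h: "\<epsilon> = -1 \<and> \<alpha> \<ge> 2 \<and> (real_of_int \<alpha> - 2) / (real_of_int \<alpha> - 1) \<le> t \<and> t \<le> (2 * real_of_int \<alpha> - 3) / (2 * real_of_int \<alpha> - 1)"
    then have K2: "real_of_int \<alpha> \<ge> 2" by simp
    have lo: "(real_of_int \<alpha> - 1) * t \<ge> real_of_int \<alpha> - 2" using h K2 by (simp add: field_simps)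
    have hi: "(2*real_of_int \<alpha> - 1) * t \<le> 2*real_of_int \<alpha> - 3" using h K2 by (simp add: field_simps)
    have "N = (2*real_of_int \<alpha> - 3) - (2*real_of_int \<alpha> - 1) * t" unfolding N_def using h by simp
    then have "0 \<le> N \<and> N \<le> 1 - t" using lo hi by (simp add: algebra_simps)
    then show ?thesis by simp
  next
    assume h: "\<epsilon> = 1 \<and> \<alpha> \<ge> 1 \<and> (2 * real_of_int \<alpha> - 1) / (2 * real_of_int \<alpha> + 1) \<le> t \<and> t \<le> real_of_int \<alpha> / (real_of_int \<alpha> + 1)"
    then have K1: "real_of_int \<alpha> \<ge> 1" by simp
    have lo: "(2*real_of_int \<alpha> + 1) * t \<ge> 2*real_of_int \<alpha> - 1" using h K1 by (simp add: field_simps)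
    have "N = (2*real_of_int \<alpha> - 1) - (2*real_of_int \<alpha> + 1) * t" unfolding N_def using h by simp
    then show ?thesis using lo by simp
  qed
  have key: "1 - t \<le> \<bar>of_int \<sigma> * (1 - t) + of_int \<rho> * N\<bar>"
    by (rule key_ineq2[OF par _ _ s1 sle _ Nc]) (use hb b0 b1 tr in \<open>auto simp: s'_def\<close>)
  have "\<bar>of_int (C + D) * x - of_int (A + B)\<bar> = \<bar>\<Delta>\<bar> * (1 - t)"
    using dr tr unfolding s_def r_def by (simp add: abs_mult)
  also have "\<dots> \<le> \<bar>\<Delta>\<bar> * \<bar>of_int \<sigma> * (1 - t) + of_int \<rho> * N\<bar>" using key by (intro mult_left_mono) auto
  also have "\<dots> = \<bar>of_int b * x - of_int a\<bar>" unfolding bx by (simp add: abs_mult)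
  finally show ?thesis .
qed




fun oA :: "(nat\<Rightarrow>int) \<Rightarrow> (nat\<Rightarrow>int) \<Rightarrow> nat \<Rightarrow> int" and oB :: "(nat\<Rightarrow>int) \<Rightarrow> (nat\<Rightarrow>int) \<Rightarrow> nat \<Rightarrow> int" where
  "oA a e 0 = 1"
| "oA a e (Suc m) = (a (Suc m) - 1) * oA a e m + a (Suc m) * oB a e m"
| "oB a e 0 = 0"
| "oB a e (Suc m) = (a (Suc m) + e (Suc m) - 1) * oA a e m + (a (Suc m) + e (Suc m)) * oB a e m"

fun oC :: "(nat\<Rightarrow>int) \<Rightarrow> (nat\<Rightarrow>int) \<Rightarrow> nat \<Rightarrow> int" and oD :: "(nat\<Rightarrow>int) \<Rightarrow> (nat\<Rightarrow>int) \<Rightarrow> nat \<Rightarrow> int" where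
  "oC a e 0 = 0"
| "oC a e (Suc m) = (a (Suc m) - 1) * oC a e m + a (Suc m) * oD a e m"
| "oD a e 0 = 1"
| "oD a e (Suc m) = (a (Suc m) + e (Suc m) - 1) * oC a e m + (a (Suc m) + e (Suc m)) * oD a e m"

definition mob :: "int \<Rightarrow> int \<Rightarrow> int \<Rightarrow> int \<Rightarrow> real \<Rightarrow> real" where
  "mob A B C D u = (of_int A * u + of_int B) / (of_int C * u + of_int D)"

lemma mob_comp:
  assumes "of_int R * u + of_int S \<noteq> (0::real)"
  shows "mob A B C D ((of_int P * u + of_int Q) / (of_int R * u + of_int S)) =
         mob (A*P + B*R) (A*Q + B*S) (C*P + D*R) (C*Q + D*S) u"
  unfolding mob_def frac_sub[OF assms] by (simp add: algebra_simps)

definition hfun :: "int \<Rightarrow> int \<Rightarrow> real \<Rightarrow> real" where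
  "hfun \<alpha> \<epsilon> v = 1 - 1 / (of_int \<alpha> + of_int \<epsilon> / (1 + v))"

fun hcomp :: "(nat\<Rightarrow>int) \<Rightarrow> (nat\<Rightarrow>int) \<Rightarrow> nat \<Rightarrow> nat \<Rightarrow> real \<Rightarrow> real" where
  "hcomp a e i 0 v = hfun (a i) (e i) v"
| "hcomp a e i (Suc r) v = hfun (a i) (e i) (hcomp a e (Suc i) r v)"

lemma tail_hcomp: "1 - 1 / oocf_tail a e r i = hcomp a e i r 1"
proof (induction r arbitrary: i)
  case 0 then show ?case by (simp add: hfun_def)
next
  case (Suc r)
  have "1 - 1 / oocf_tail a e (Suc r) i = hfun (a i) (e i) (1 - 1 / oocf_tail a e r (Suc i))"
    unfolding hfun_def by (simp add: algebra_simps)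
  then show ?case using Suc.IH by simp
qed

lemma hcomp_shift: "hcomp a e i (Suc r) v = hcomp a e i r (hfun (a (i + r + 1)) (e (i + r + 1)) v)"
proof (induction r arbitrary: i)
  case 0 then show ?case by simp
next
  case (Suc r)
  show ?case using Suc.IH[of "Suc i"] by simp
qed

lemma hfun_gfun:
  assumes "(\<alpha>, \<epsilon>) \<in> oocf_D" "0 \<le> v"
  shows "hfun \<alpha> \<epsilon> v = gfun \<alpha> \<epsilon> v"
proof -
  have d: "\<alpha> \<ge> 1" "\<alpha> + \<epsilon> \<ge> 1" using inD[OF assms(1)] by auto
  have v1: "1 + v > 0" using assms by simp
  have "of_int \<alpha> * (1 + v) \<ge> of_int \<alpha>" using d assms by simp
  then have w: "of_int \<alpha> * (1 + v) + of_int \<epsilon> \<ge> (1::real)" using d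
    by (smt (verit) of_int_add of_int_le_iff of_int_1)
  have "of_int \<alpha> + of_int \<epsilon> / (1 + v) = (of_int \<alpha> * (1 + v) + of_int \<epsilon>) / (1 + v)"
    using v1 by (simp add: field_simps)
  then have "hfun \<alpha> \<epsilon> v = 1 - (1 + v) / (of_int \<alpha> * (1 + v) + of_int \<epsilon>)"
    unfolding hfun_def by simp
  also have "\<dots> = (of_int \<alpha> * (1 + v) + of_int \<epsilon> - (1 + v)) / (of_int \<alpha> * (1 + v) + of_int \<epsilon>)"
    using w by (simp add: field_simps)
  also have "\<dots> = gfun \<alpha> \<epsilon> v" unfolding gfun_def by (simp add: algebra_simps)
  finally show ?thesis .
qed

lemma gfun_den:
  assumes "(\<alpha>, \<epsilon>) \<in> oocf_D" "0 \<le> v"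
  shows "of_int \<alpha> * v + of_int (\<alpha> + \<epsilon>) > (0::real)"
proof -
  have d: "\<alpha> \<ge> 1" "\<alpha> + \<epsilon> \<ge> 1" using inD[OF assms(1)] by auto
  have "of_int \<alpha> * v \<ge> 0" using d assms by simp
  moreover have "of_int (\<alpha> + \<epsilon>) \<ge> (1::real)" using d by simp
  ultimately show ?thesis by linarith
qed

lemma gfun_range:
  assumes "(\<alpha>, \<epsilon>) \<in> oocf_D" "0 \<le> v" "v \<le> 1"
  shows "0 \<le> gfun \<alpha> \<epsilon> v \<and> gfun \<alpha> \<epsilon> v \<le> 1"
proof -
  have d: "\<alpha> \<ge> 1" "\<alpha> + \<epsilon> \<ge> 1" using inD[OF assms(1)] by auto
  have den: "of_int \<alpha> * v + of_int (\<alpha> + \<epsilon>) > (0::real)" by (rule gfun_den[OF assms(1,2)])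
  have num: "of_int (\<alpha> - 1) * v + of_int (\<alpha> + \<epsilon> - 1) \<ge> (0::real)" using d assms by simp
  have le: "of_int (\<alpha> - 1) * v + of_int (\<alpha> + \<epsilon> - 1) \<le> of_int \<alpha> * v + (of_int (\<alpha> + \<epsilon>)::real)"
    using assms by (simp add: algebra_simps)
  show ?thesis unfolding gfun_def using den num le by simp
qed

locale oocf_ass =
  fixes a e :: "nat \<Rightarrow> int"
  assumes hD: "\<And>k. k \<ge> 1 \<Longrightarrow> (a k, e k) \<in> oocf_D"
begin

lemma CD_pos: "oC a e m \<ge> 0 \<and> oD a e m \<ge> 1"
proof (induction m)
  case 0 then show ?case by simp
next
  case (Suc m)
  have d: "a (Suc m) \<ge> 1" "a (Suc m) + e (Suc m) \<ge> 1" using inD[OF hD[of "Suc m"]] by auto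
  have "oC a e (Suc m) \<ge> 0" using d Suc.IH by simp
  moreover have "(a (Suc m) + e (Suc m) - 1) * oC a e m \<ge> 0" using d Suc.IH by simp
  moreover have "(a (Suc m) + e (Suc m)) * oD a e m \<ge> 1 * 1" using d Suc.IH by (intro mult_mono) auto
  ultimately show ?case by simp
qed

lemma det_o: "oA a e m * oD a e m - oB a e m * oC a e m = 1 \<or> oA a e m * oD a e m - oB a e m * oC a e m = -1"
proof (induction m)
  case 0 then show ?case by simp
next
  case (Suc m)
  have "oA a e (Suc m) * oD a e (Suc m) - oB a e (Suc m) * oC a e (Suc m) =
     - e (Suc m) * (oA a e m * oD a e m - oB a e m * oC a e m)" by (simp add: algebra_simps)
  then show ?case using Suc.IH inD[OF hD[of "Suc m"]] by auto
qed

lemma par_o: "odd (oA a e m + oB a e m) \<and> odd (oC a e m + oD a e m)"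
proof (induction m)
  case 0 then show ?case by simp
next
  case (Suc m)
  define \<alpha> where "\<alpha> = a (Suc m)"
  have e: "e (Suc m) = 1 \<or> e (Suc m) = -1" using inD[OF hD[of "Suc m"]] by auto
  then have "oA a e (Suc m) + oB a e (Suc m) = (oA a e m + oB a e m) + 2 * ((\<alpha> - 1) * oA a e m + \<alpha> * oB a e m)
     \<or> oA a e (Suc m) + oB a e (Suc m) = (oA a e m + oB a e m) + 2 * ((\<alpha> - 2) * oA a e m + (\<alpha> - 1) * oB a e m)"
    unfolding \<alpha>_def by (auto simp: algebra_simps)
  moreover have "oC a e (Suc m) + oD a e (Suc m) = (oC a e m + oD a e m) + 2 * ((\<alpha> - 1) * oC a e m + \<alpha> * oD a e m)
     \<or> oC a e (Suc m) + oD a e (Suc m) = (oC a e m + oD a e m) + 2 * ((\<alpha> - 2) * oC a e m + (\<alpha> - 1) * oD a e m)"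
    using e unfolding \<alpha>_def by (auto simp: algebra_simps)
  ultimately obtain Y Z where "oA a e (Suc m) + oB a e (Suc m) = (oA a e m + oB a e m) + 2 * Y"
     "oC a e (Suc m) + oD a e (Suc m) = (oC a e m + oD a e m) + 2 * Z" by blast
  then show ?case using Suc.IH by simp
qed

lemma mob_step:
  assumes "0 \<le> v"
  shows "mob (oA a e m) (oB a e m) (oC a e m) (oD a e m) (gfun (a (Suc m)) (e (Suc m)) v) =
         mob (oA a e (Suc m)) (oB a e (Suc m)) (oC a e (Suc m)) (oD a e (Suc m)) v"
proof -
  define \<alpha> where "\<alpha> = a (Suc m)"
  define \<epsilon> where "\<epsilon> = e (Suc m)"
  have Dm: "(\<alpha>, \<epsilon>) \<in> oocf_D" using hD[of "Suc m"] unfolding \<alpha>_def \<epsilon>_def by simp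
  have den: "of_int \<alpha> * v + of_int (\<alpha> + \<epsilon>) \<noteq> (0::real)" using gfun_den[OF Dm assms] by simp
  have "mob (oA a e m) (oB a e m) (oC a e m) (oD a e m) (gfun \<alpha> \<epsilon> v) =
     mob (oA a e m * (\<alpha> - 1) + oB a e m * \<alpha>) (oA a e m * (\<alpha> + \<epsilon> - 1) + oB a e m * (\<alpha> + \<epsilon>))
         (oC a e m * (\<alpha> - 1) + oD a e m * \<alpha>) (oC a e m * (\<alpha> + \<epsilon> - 1) + oD a e m * (\<alpha> + \<epsilon>)) v"
    unfolding gfun_def by (rule mob_comp[OF den])
  also have "\<dots> = mob (oA a e (Suc m)) (oB a e (Suc m)) (oC a e (Suc m)) (oD a e (Suc m)) v"
    unfolding \<alpha>_def \<epsilon>_def by (simp only: oA.simps oB.simps oC.simps oD.simps mult.commute)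
  finally show ?thesis unfolding \<alpha>_def \<epsilon>_def .
qed

lemma S_grow: "oC a e (Suc m) + oD a e (Suc m) \<ge> oC a e m + oD a e m + 1"
proof -
  define \<alpha> where "\<alpha> = a (Suc m)"
  define \<epsilon> where "\<epsilon> = e (Suc m)"
  have d: "\<alpha> \<ge> 1" "\<epsilon> = 1 \<or> \<epsilon> = -1" using inD[OF hD[of "Suc m"]] unfolding \<alpha>_def \<epsilon>_def by auto
  have a2: "\<epsilon> = -1 \<Longrightarrow> \<alpha> \<ge> 2" using hD[of "Suc m"] unfolding oocf_D_def \<alpha>_def \<epsilon>_def by auto
  have "oC a e (Suc m) + oD a e (Suc m) - (oC a e m + oD a e m) = (2*\<alpha>+\<epsilon>-3) * oC a e m + (2*\<alpha>+\<epsilon>-1) * oD a e m"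
    unfolding \<alpha>_def \<epsilon>_def by (simp add: algebra_simps)
  moreover have "(2*\<alpha>+\<epsilon>-3) * oC a e m \<ge> 0" using d a2 CD_pos[of m] by (intro mult_nonneg_nonneg) auto
  moreover have "(2*\<alpha>+\<epsilon>-1) * oD a e m \<ge> 1 * 1" using d a2 CD_pos[of m] by (intro mult_mono) auto
  ultimately show ?thesis by linarith
qed

lemma S_ge: "oC a e m + oD a e m \<ge> int m + 1"
proof (induction m)
  case 0 then show ?case by simp
next
  case (Suc m) then show ?case using S_grow[of m] by simp
qed

lemma conv_mob: "0 \<le> v \<Longrightarrow> v \<le> 1 \<Longrightarrow>
   hcomp a e 1 m v = mob (oA a e (Suc m)) (oB a e (Suc m)) (oC a e (Suc m)) (oD a e (Suc m)) v"
proof (induction m arbitrary: v)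
  case 0
  have "hcomp a e 1 0 v = gfun (a 1) (e 1) v" using hfun_gfun[OF hD[of 1] 0(1)] by simp
  then show ?case unfolding gfun_def mob_def by simp
next
  case (Suc m)
  define \<alpha> where "\<alpha> = a (Suc (Suc m))"
  define \<epsilon> where "\<epsilon> = e (Suc (Suc m))"
  have Dm: "(\<alpha>, \<epsilon>) \<in> oocf_D" using hD[of "Suc (Suc m)"] unfolding \<alpha>_def \<epsilon>_def by simp
  have sh: "1 + m + 1 = Suc (Suc m)" by simp
  have "hcomp a e 1 (Suc m) v = hcomp a e 1 m (hfun \<alpha> \<epsilon> v)"
    unfolding \<alpha>_def \<epsilon>_def using hcomp_shift[of a e 1 m v] unfolding sh .
  also have "\<dots> = hcomp a e 1 m (gfun \<alpha> \<epsilon> v)" using hfun_gfun[OF Dm Suc.prems(1)] by simp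
  also have "\<dots> = mob (oA a e (Suc m)) (oB a e (Suc m)) (oC a e (Suc m)) (oD a e (Suc m)) (gfun \<alpha> \<epsilon> v)"
    using gfun_range[OF Dm Suc.prems] Suc.IH by simp
  also have "\<dots> = mob (oA a e (Suc (Suc m))) (oB a e (Suc (Suc m))) (oC a e (Suc (Suc m))) (oD a e (Suc (Suc m))) v"
    unfolding \<alpha>_def \<epsilon>_def by (rule mob_step[OF Suc.prems(1)])
  finally show ?case .
qed

lemma conv_o: "m \<ge> 1 \<Longrightarrow> oocf_conv a e m = of_int (oA a e m + oB a e m) / of_int (oC a e m + oD a e m)"
proof -
  assume "m \<ge> 1"
  then obtain k where k: "m = Suc k" by (cases m) auto
  have "oocf_conv a e m = hcomp a e 1 k 1" unfolding oocf_conv_def k tail_hcomp by simp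
  also have "\<dots> = mob (oA a e m) (oB a e m) (oC a e m) (oD a e m) 1" unfolding k by (rule conv_mob) auto
  finally show ?thesis unfolding mob_def by simp
qed

lemma x_rep:
  assumes B: "\<And>n. n \<ge> 1 \<Longrightarrow> (oocf_T ^^ (n - 1)) x \<in> oocf_B (a n) (e n)"
  shows "x = mob (oA a e m) (oB a e m) (oC a e m) (oD a e m) ((oocf_T ^^ m) x)"
proof (induction m)
  case 0 then show ?case unfolding mob_def by simp
next
  case (Suc m)
  define \<alpha> where "\<alpha> = a (Suc m)"
  define \<epsilon> where "\<epsilon> = e (Suc m)"
  have Dm: "(\<alpha>, \<epsilon>) \<in> oocf_D" using hD[of "Suc m"] unfolding \<alpha>_def \<epsilon>_def by simp
  have Bm: "(oocf_T ^^ m) x \<in> oocf_B \<alpha> \<epsilon>" using B[of "Suc m"] unfolding \<alpha>_def \<epsilon>_def by simp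
  have nn: "0 \<le> (oocf_T ^^ Suc m) x" using B_range[OF hD[of "Suc (Suc m)"] B[of "Suc (Suc m)"]] by simp
  have g: "gfun \<alpha> \<epsilon> ((oocf_T ^^ Suc m) x) = (oocf_T ^^ m) x" using g_T[OF Dm Bm] by simp
  have "x = mob (oA a e m) (oB a e m) (oC a e m) (oD a e m) ((oocf_T ^^ m) x)" by (rule Suc.IH)
  also have "\<dots> = mob (oA a e m) (oB a e m) (oC a e m) (oD a e m) (gfun \<alpha> \<epsilon> ((oocf_T ^^ Suc m) x))"
    by (simp only: g)
  also have "\<dots> = mob (oA a e (Suc m)) (oB a e (Suc m)) (oC a e (Suc m)) (oD a e (Suc m)) ((oocf_T ^^ Suc m) x)"
    unfolding \<alpha>_def \<epsilon>_def by (rule mob_step[OF nn])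
  finally show ?case .
qed

end



lemma unit_of_dvd2_odd: "(c::int) dvd 2 \<Longrightarrow> odd c \<Longrightarrow> is_unit c"
proof -
  assume "c dvd 2" "odd c"
  then have "coprime c 2" by simp
  then show ?thesis using coprime_common_divisor[of c 2 c] \<open>c dvd 2\<close> by simp
qed

theorem mainTheorem12:
  fixes x :: real and b eta :: "nat \<Rightarrow> int" and n :: nat and p q :: int
  assumes "0 < x" and "x < 1" and "x \<notin> \<rat>"
    and "is_eicf_expansion (1 - x) b eta"
    and "n \<ge> 1"
    and "eicf_pq b eta n = (p, q)"
    and "odd (q - p)" and "odd q"
  shows "best_1rat_approx x (q - p) q \<and>
         (\<forall>a e. is_oocf_expansion x a e \<longrightarrow>
            (\<exists>m\<ge>1. real_of_int (q - p) / real_of_int q = oocf_conv a e m))"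
proof -
  define y where "y = 1 - x"
  have yirr: "y \<notin> \<rat>"
  proof
    assume "y \<in> \<rat>"
    then have "1 - y \<in> \<rat>" by (simp add: Rats_diff)
    then show False using assms(3) unfolding y_def by simp
  qed
  define ys where "ys k = (TE ^^ k) y" for k
  have ysS: "\<And>k. ys (Suc k) = TE (ys k)" unfolding ys_def by simp
  have dig: "\<And>k. eicf_digit (ys k) (b (Suc k)) (eta (Suc k))"
  proof -
    fix k
    have "eicf_digit ((TE ^^ (Suc k - 1)) (1 - x)) (b (Suc k)) (eta (Suc k))"
      using assms(4)[unfolded is_eicf_expansion_def, rule_format, of "Suc k"] by simp
    then show "eicf_digit (ys k) (b (Suc k)) (eta (Suc k))" unfolding ys_def y_def by simp
  qed
  have irr: "\<And>k. ys k \<notin> \<rat>"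
  proof -
    fix k show "ys k \<notin> \<rat>"
    proof (induction k)
      case 0 then show ?case using yirr unfolding ys_def by simp
    next
      case (Suc k) then show ?case using TE_step[OF Suc.IH dig[of k]] ysS by simp
    qed
  qed
  have st: "\<And>k. 1 / ys k = of_int (b (Suc k)) + of_int (eta (Suc k)) * ys (Suc k) \<and> 0 < ys (Suc k) \<and> ys (Suc k) < 1
      \<and> b (Suc k) \<ge> 2 \<and> (eta (Suc k) = 1 \<or> eta (Suc k) = -1)"
    using TE_step[OF irr dig] ysS by simp
  interpret E: eicf_ass b eta
  proof
    fix k :: nat assume "k \<ge> 1"
    then obtain k' where "k = Suc k'" by (cases k) auto
    then show "b k \<ge> 2" "eta k = 1 \<or> eta k = -1" using st[of k'] by auto
  qed
  have nz: "ys k \<noteq> 0" for k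
  proof
    assume "ys k = 0" then have "ys k \<in> \<rat>" by simp
    then show False using irr by simp
  qed
  obtain m where nm: "n = Suc m" using assms(5) by (cases n) auto
  have pq: "p = ep b eta n" "q = eq b eta n" using E.pq_eq[OF assms(5)] assms(6) by auto
  define P0 where "P0 = ep b eta m"
  define Q0 where "Q0 = eq b eta m"
  define u where "u = ys n"
  have ys0: "ys 0 = y" unfolding ys_def by simp
  have recs: "\<And>k. 1 / ys k = of_int (b (Suc k)) + of_int (eta (Suc k)) * ys (Suc k)" using st by blast
  have etas: "\<And>k. eta (Suc k) = 1 \<or> eta (Suc k) = -1" using st by blast
  have drec: "of_int q * y - of_int p = - of_int (eta n) * u * (of_int Q0 * y - of_int P0)"
    using delta_rec[of ys b eta, OF recs nz etas, of m] unfolding pq nm P0_def Q0_def u_def ys0 .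
  have pe: "even p"
  proof -
    have "even (q - (q - p))" using assms(7,8) by (simp only: even_diff) simp
    then show ?thesis by simp
  qed
  have dm: "P0 * q - p * Q0 = 1 \<or> P0 * q - p * Q0 = -1"
    using E.det_ep[of m] unfolding P0_def Q0_def pq nm .
  have oP0: "odd P0"
  proof
    assume "even P0"
    then have ev: "even (P0 * q - p * Q0)" using pe by simp
    show False using dm
    proof
      assume "P0 * q - p * Q0 = 1" then show False using ev by simp
    next
      assume "P0 * q - p * Q0 = -1" then show False using ev by simp
    qed
  qed
  have Qb: "1 \<le> Q0" "Q0 < q" using E.eq_mono[of m] unfolding Q0_def pq nm by auto
  have u01: "0 < u" "u < 1" using st[of m] unfolding u_def nm by auto
  have etan: "eta n = 1 \<or> eta n = -1" using st[of m] unfolding nm by auto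
  have dm0: "of_int Q0 * y - of_int P0 \<noteq> 0"
  proof
    assume "of_int Q0 * y - of_int P0 = 0"
    then have "y = of_int P0 / of_int Q0" using Qb by (simp add: field_simps)
    then have "y \<in> \<rat>" by simp
    then show False using yirr by simp
  qed
  have cop: "coprime (q - p) q"
  proof (rule coprimeI)
    fix c assume c: "c dvd q - p" "c dvd q"
    have "c dvd q - (q - p)" using dvd_diff[OF c(2) c(1)] .
    then have cp: "c dvd p" by simp
    have "coprime p q" using E.coprime_ep[of n] unfolding pq[symmetric] .
    then show "is_unit c" using coprime_common_divisor cp c(2) by blast
  qed
  have bestA: "best_1rat_approx x (q - p) q"
    unfolding best_1rat_approx_def
  proof (intro conjI allI impI)
    show "one_rational (q - p) q" unfolding one_rational_def using Qb cop assms(7,8) by auto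
  next
    fix a' b' assume H: "one_rational a' b' \<and> (a', b') \<noteq> (q - p, q) \<and> b' \<le> q"
    have b'0: "b' > 0" and oa': "odd a'" and ob': "odd b'" using H unfolding one_rational_def by auto
    define c where "c = b' - a'"
    have ce: "even c" unfolding c_def using oa' ob' by simp
    define d where "d = P0 * q - p * Q0"
    have dd: "d * d = 1" using dm unfolding d_def by auto
    define s where "s = - d * (c * Q0 - P0 * b')"
    define t where "t = - d * (p * b' - q * c)"
    have "s * p + t * P0 = d * d * c" unfolding s_def t_def d_def by algebra
    then have hc: "c = s * p + t * P0" using dd by simp
    have "s * q + t * Q0 = d * d * b'" unfolding s_def t_def d_def by algebra
    then have hb: "b' = s * q + t * Q0" using dd by simp
    have te: "even t"
    proof (rule ccontr)
      assume ot: "odd t"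
      have "even (s * p)" using pe by simp
      moreover have "odd (t * P0)" using ot oP0 by simp
      ultimately have "odd (s * p + t * P0)" by simp
      then have "odd c" unfolding hc .
      then show False using ce by simp
    qed
    have so: "odd s"
    proof (rule ccontr)
      assume "\<not> odd s"
      then have "even (s * q + t * Q0)" using te by simp
      then show False using hb ob' by simp
    qed
    have st10: "(s, t) \<noteq> (1, 0)"
    proof
      assume "(s, t) = (1, 0)"
      then have "c = p" "b' = q" using hc hb by auto
      then have "a' = q - p" unfolding c_def by simp
      then show False using H \<open>b' = q\<close> by simp
    qed
    have ineq: "u < \<bar>of_int t - of_int (eta n) * of_int s * u\<bar>"
      using eicf_ineq[OF so te st10 _ _ Qb u01 etan] hb b'0 H by simp
    have "of_int b' * x - of_int a' = - (of_int b' * y - of_int c)" unfolding y_def c_def by (simp add: algebra_simps)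
    also have "of_int b' * y - of_int c = of_int s * (of_int q * y - of_int p) + of_int t * (of_int Q0 * y - of_int P0)"
      unfolding hb hc by (simp add: algebra_simps)
    also have "\<dots> = (of_int Q0 * y - of_int P0) * (of_int t - of_int (eta n) * of_int s * u)"
      unfolding drec by (simp add: algebra_simps)
    finally have e1: "\<bar>of_int b' * x - of_int a'\<bar> = \<bar>of_int Q0 * y - of_int P0\<bar> * \<bar>of_int t - of_int (eta n) * of_int s * u\<bar>"
      by (simp add: abs_mult)
    have "of_int q * x - of_int (q - p) = - (of_int q * y - of_int p)" unfolding y_def by (simp add: algebra_simps)
    then have e2: "\<bar>of_int q * x - of_int (q - p)\<bar> = \<bar>of_int Q0 * y - of_int P0\<bar> * u"
      unfolding drec using u01 etan by (auto simp: abs_mult)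
    have "\<bar>of_int Q0 * y - of_int P0\<bar> * u < \<bar>of_int Q0 * y - of_int P0\<bar> * \<bar>of_int t - of_int (eta n) * of_int s * u\<bar>"
      using ineq dm0 by simp
    then show "\<bar>of_int q * x - of_int (q - p)\<bar> < \<bar>of_int b' * x - of_int a'\<bar>" unfolding e1 e2 .
  qed
  have q2: "q \<ge> 2" using Qb by simp
  have partB: "\<exists>m\<ge>1. real_of_int (q - p) / real_of_int q = oocf_conv a e m" if exp: "is_oocf_expansion x a e" for a e
  proof -
    have hD: "\<And>k. k \<ge> 1 \<Longrightarrow> (a k, e k) \<in> oocf_D" and hB: "\<And>k. k \<ge> 1 \<Longrightarrow> (oocf_T ^^ (k - 1)) x \<in> oocf_B (a k) (e k)"
      using exp unfolding is_oocf_expansion_def by auto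
    interpret O: oocf_ass a e by unfold_locales (rule hD)
    define S where "S k = oC a e k + oD a e k" for k
    define R where "R k = oA a e k + oB a e k" for k
    define M where "M = {k. S k \<le> q}"
    have fin: "finite M"
    proof (rule finite_subset)
      show "M \<subseteq> {..nat q}"
      proof
        fix k assume "k \<in> M"
        then have "int k + 1 \<le> q" using O.S_ge[of k] unfolding M_def S_def by simp
        then show "k \<in> {..nat q}" by simp
      qed
    qed simp
    have M0: "0 \<in> M" unfolding M_def S_def using q2 by simp
    define mm where "mm = Max M"
    have mmM: "mm \<in> M" unfolding mm_def using fin M0 by (intro Max_in) auto
    have Smm: "S mm \<le> q" using mmM unfolding M_def by simp
    have Ssuc: "q < S (Suc mm)"
    proof (rule ccontr)
      assume "\<not> q < S (Suc mm)"
      then have "Suc mm \<in> M" unfolding M_def by simp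
      then have "Suc mm \<le> mm" unfolding mm_def using fin by simp
      then show False by simp
    qed
    have CD: "oC a e mm \<ge> 0" "oD a e mm \<ge> 1" using O.CD_pos[of mm] by auto
    have par: "odd (oA a e mm + oB a e mm)" "odd (oC a e mm + oD a e mm)" using O.par_o[of mm] by auto
    have xr: "x = (of_int (oA a e mm) * (oocf_T ^^ mm) x + of_int (oB a e mm)) / (of_int (oC a e mm) * (oocf_T ^^ mm) x + of_int (oD a e mm))"
      using O.x_rep[OF hB, of mm] unfolding mob_def .
    have Bm: "(oocf_T ^^ mm) x \<in> oocf_B (a (Suc mm)) (e (Suc mm))" using hB[of "Suc mm"] by simp
    have Sexp: "S (Suc mm) = (2 * a (Suc mm) + e (Suc mm) - 2) * oC a e mm + (2 * a (Suc mm) + e (Suc mm)) * oD a e mm"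
      unfolding S_def by (simp add: algebra_simps)
    have lt: "q < (2 * a (Suc mm) + e (Suc mm) - 2) * oC a e mm + (2 * a (Suc mm) + e (Suc mm)) * oD a e mm"
      using Ssuc unfolding Sexp .
    have q0: "0 < q" using q2 by simp
    have Dm: "(a (Suc mm), e (Suc mm)) \<in> oocf_D" using hD by simp
    have key: "\<bar>of_int (S mm) * x - of_int (R mm)\<bar> \<le> \<bar>of_int q * x - of_int (q - p)\<bar>"
      using oocf_key[OF CD O.det_o[of mm] xr Dm Bm assms(7) assms(8) par q0 lt]
      unfolding S_def R_def .
    have detR: "R mm * S (Suc mm) - S mm * R (Suc mm) = 2 * (oA a e mm * oD a e mm - oB a e mm * oC a e mm)"
      unfolding R_def S_def by (simp add: algebra_simps)
    have oneR: "one_rational (R mm) (S mm)"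
      unfolding one_rational_def
    proof (intro conjI)
      show "S mm > 0" using CD unfolding S_def by simp
      show "odd (R mm)" "odd (S mm)" using par unfolding R_def S_def by auto
      show "coprime (R mm) (S mm)"
      proof (rule coprimeI)
        fix c assume c: "c dvd R mm" "c dvd S mm"
        then have "c dvd R mm * S (Suc mm) - S mm * R (Suc mm)" by simp
        define dt where "dt = oA a e mm * oD a e mm - oB a e mm * oC a e mm"
        have c2: "c dvd 2 * dt" using \<open>c dvd R mm * S (Suc mm) - S mm * R (Suc mm)\<close> unfolding detR dt_def .
        have ddt: "dt * dt = 1" using O.det_o[of mm] unfolding dt_def by auto
        have "c dvd (2 * dt) * dt" using c2 by (rule dvd_mult2)
        moreover have "(2 * dt) * dt = 2" using ddt by (metis mult.assoc mult_1_right)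
        ultimately have "c dvd 2" by simp
        moreover have "odd c"
        proof
          assume "even c"
          then have "2 dvd S mm" using c(2) by (rule dvd_trans)
          then show False using par(2) unfolding S_def by simp
        qed
        ultimately show "is_unit c" by (rule unit_of_dvd2_odd)
      qed
    qed
    have eqRS: "(R mm, S mm) = (q - p, q)"
    proof (rule ccontr)
      assume ne: "(R mm, S mm) \<noteq> (q - p, q)"
      have "\<bar>of_int q * x - of_int (q - p)\<bar> < \<bar>of_int (S mm) * x - of_int (R mm)\<bar>"
        using bestA oneR ne Smm unfolding best_1rat_approx_def by blast
      then show False using key by simp
    qed
    have mm1: "mm \<ge> 1"
    proof (rule ccontr)
      assume "\<not> mm \<ge> 1"
      then have "mm = 0" by simp
      then have "S mm = 1" unfolding S_def by simp
      then show False using eqRS q2 by simp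
    qed
    have "oocf_conv a e mm = of_int (R mm) / of_int (S mm)" using O.conv_o[OF mm1] unfolding R_def S_def .
    then show ?thesis using eqRS mm1 by auto
  qed
  show ?thesis using bestA partB by blast
qed


end
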